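(* Let $W$ be a symmetric binary-input discrete memoryless channel with finite output alphabet $\mathcal{Y}$, let $N=2^n$, let $0\le i\le N-1$, and let $A=A(N,i)$ be the binary matrix formed by rows $i+1,\dots,N$ of $G_N=F^{\otimes n}$, where $F=\begin{pmatrix}1&0\\1&1\end{pmatrix}$ over $\mathbb{F}_2$. Let $P$ be an $N\times N$ permutation matrix and suppose there exists an invertible $(N-i)\times(N-i)$ matrix $H$ over $\mathbb{F}_2$ with $AP=HA$. Then for every $\mathbf{y}\in\mathcal{Y}^N$, the vectors $\mathbf{y}$ and $T_P(\mathbf{y})$ are probability equivalent on $A$, i.e. $W_A(T_P(\mathbf{y}))=W_A(\mathbf{y})$.
   Context: Symmetric channel: $W(y|x)$, $x\in\{0,1\}$, $y\in\mathcal{Y}$, and there is an involution $y\mapsto 1\cdot y$ of $\mathcal{Y}$ with $W(1\cdot y|0)=W(y|1)$ and $W(1\cdot y|1)=W(y|0)$; set $0\cdot y=y$. For $\mathbf{u}\in\mathbb{F}_2^N$ and $\mathbf{y}\in\mathcal{Y}^N$, $\mathbf{u}\cdot\mathbf{y}=(u_1\cdot y_1,\dots,u_N\cdot y_N)$. $W^N(\mathbf{y}|\mathbf{x})=\prod_{j=1}^N W(y_j|x_j)$. For a binary matrix $A$ with $N$ columns, with row space $\mathrm{row}(A)\subseteq\mathbb{F}_2^N$, define $W_A(\mathbf{y})=\frac{1}{2^{N-1}}\sum_{\mathbf{u}\in\mathrm{row}(A)}W^N(\mathbf{u}\cdot\mathbf{y}|\mathbf{0})$; two vectors $\mathbf{y},\mathbf{v}$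 are probability equivalent on $A$ if $W_A(\mathbf{y})=W_A(\mathbf{v})$. $T_P(\mathbf{y})$ denotes the vector obtained by permuting the coordinates of $\mathbf{y}$ according to $P$ (i.e. $\mathbf{y}P$). *)

theory Defs
  imports "HOL-Library.Z2" "Jordan_Normal_Form.Matrix"
begin

definition F_kernel :: "nat \<Rightarrow> nat \<Rightarrow> bit" where
  "F_kernel r c = (if r = 0 \<and> c = 1 then 0 else 1)"

text \<open>Entries of G_N = F^{\<otimes> n}, N = 2^n, via G_{n+1} = F \<otimes> G_n (Kronecker product), 0-based.\<close>
fun G_entry :: "nat \<Rightarrow> nat \<Rightarrow> nat \<Rightarrow> bit" where
  "G_entry 0 r c = 1"
| "G_entry (Suc n) r c = F_kernel (r div 2^n) (c div 2^n) * G_entry n (r mod 2^n) (c mod 2^n)"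

definition G_mat :: "nat \<Rightarrow> bit mat" where
  "G_mat n = mat (2^n) (2^n) (\<lambda>(r, c). G_entry n r c)"

text \<open>A(N,i): rows i+1,...,N (1-based) of G_N, i.e. rows i..N-1 (0-based).\<close>
definition A_mat :: "nat \<Rightarrow> nat \<Rightarrow> bit mat" where
  "A_mat n i = mat (2^n - i) (2^n) (\<lambda>(r, c). G_mat n $$ (r + i, c))"

definition row_space :: "bit mat \<Rightarrow> bit vec set" where
  "row_space A = {transpose_mat A *\<^sub>v v | v. v \<in> carrier_vec (dim_row A)}"

definition permutation_mat :: "nat \<Rightarrow> bit mat \<Rightarrow> bool" where
  "permutation_mat N P \<longleftrightarrow> (\<exists>\<sigma>. \<sigma> permutes {..<N} \<and>
      P = mat N N (\<lambda>(r, c). if \<sigma> r = c then 1 else 0))"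

text \<open>T_P(y) = yP: coordinate c of yP is y_r for the unique r with P_{r,c} = 1.\<close>
definition T_P :: "nat \<Rightarrow> bit mat \<Rightarrow> (nat \<Rightarrow> 'y) \<Rightarrow> (nat \<Rightarrow> 'y)" where
  "T_P N P y = (\<lambda>c. y (THE r. r < N \<and> P $$ (r, c) = 1))"

text \<open>Symmetric channel: W x y = W(y|x), flip is the involution y \<mapsto> 1\<cdot>y.\<close>
definition symmetric_bdmc :: "(bit \<Rightarrow> 'y::finite \<Rightarrow> real) \<Rightarrow> ('y \<Rightarrow> 'y) \<Rightarrow> bool" where
  "symmetric_bdmc W flip \<longleftrightarrow>
     (\<forall>x y. W x y \<ge> 0) \<and> (\<forall>x. (\<Sum>y\<in>UNIV. W x y) = 1) \<and>
     (\<forall>y. flip (flip y) = y) \<and>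
     (\<forall>y. W 0 (flip y) = W 1 y) \<and> (\<forall>y. W 1 (flip y) = W 0 y)"

definition act :: "('y \<Rightarrow> 'y) \<Rightarrow> bit \<Rightarrow> 'y \<Rightarrow> 'y" where
  "act flip b y = (if b = 1 then flip y else y)"

definition W_A :: "(bit \<Rightarrow> 'y \<Rightarrow> real) \<Rightarrow> ('y \<Rightarrow> 'y) \<Rightarrow> nat \<Rightarrow> bit mat \<Rightarrow> (nat \<Rightarrow> 'y) \<Rightarrow> real" where
  "W_A W flip N A y = (1 / 2 ^ (N - 1)) *
     (\<Sum>u\<in>row_space A. \<Prod>j<N. W 0 (act flip (u $ j) (y j)))"

end

theory Submission
  imports Defs
begin

lemma finite_carrier_vec_bit: "finite (carrier_vec N :: bit vec set)"
proof -
  have "carrier_vec N \<subseteq> vec_of_list ` {xs::bit list. set xs \<subseteq> UNIV \<and> length xs = N}"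
  proof
    fix v :: "bit vec" assume "v \<in> carrier_vec N"
    then show "v \<in> vec_of_list ` {xs::bit list. set xs \<subseteq> UNIV \<and> length xs = N}"
      by (intro image_eqI[of _ _ "list_of_vec v"]) (auto simp: vec_list)
  qed
  moreover have "finite {xs::bit list. set xs \<subseteq> UNIV \<and> length xs = N}"
  proof (rule finite_lists_length_eq)
    have "(UNIV::bit set) = {0,1}" by (auto intro: bit.exhaust)
    then show "finite (UNIV::bit set)" by (metis finite_insert finite.emptyI)
  qed
  ultimately show ?thesis by (meson finite_surj)
qed

theorem theorem1:
  fixes W :: "bit \<Rightarrow> 'y::finite \<Rightarrow> real" and flip :: "'y \<Rightarrow> 'y"
    and n i :: nat and P H :: "bit mat" and y :: "nat \<Rightarrow> 'y"
  assumes "symmetric_bdmc W flip"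
    and "i \<le> 2^n - 1"
    and "permutation_mat (2^n) P"
    and "H \<in> carrier_mat (2^n - i) (2^n - i)" and "invertible_mat H"
    and "A_mat n i * P = H * A_mat n i"
  shows "W_A W flip (2^n) (A_mat n i) (T_P (2^n) P y) = W_A W flip (2^n) (A_mat n i) y"
proof -
  define N :: nat where "N = 2^n"
  define A where "A = A_mat n i"
  define m where "m = N - i"
  have AP: "A * P = H * A" using assms(6) by (simp add: A_def)
  have Hc: "H \<in> carrier_mat m m" using assms(4) by (simp add: m_def N_def)
  have Ac: "A \<in> carrier_mat m N" by (simp add: A_def A_mat_def m_def N_def)
  obtain \<sigma> where sig: "\<sigma> permutes {..<N}"
    and Pdef: "P = mat N N (\<lambda>(r, c). if \<sigma> r = c then 1 else 0)"
    using assms(3) unfolding permutation_mat_def N_def by blast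
  have isig: "inv_into UNIV \<sigma> permutes {..<N}" using sig by (rule permutes_inv)
  have Pc: "P \<in> carrier_mat N N" by (simp add: Pdef)
  have inv1: "\<And>x. inv_into UNIV \<sigma> (\<sigma> x) = x" and inv2: "\<And>x. \<sigma> (inv_into UNIV \<sigma> x) = x"
    using permutes_inverses[OF sig] by auto
  have ilt: "\<And>k. k < N \<Longrightarrow> inv_into UNIV \<sigma> k < N"
    using permutes_in_image[OF isig] by auto
  have slt: "\<And>k. k < N \<Longrightarrow> \<sigma> k < N"
    using permutes_in_image[OF sig] by auto
  define g where "g u = transpose_mat P *\<^sub>v u" for u :: "bit vec"
  have gapp: "(g u) $ k = u $ (inv_into UNIV \<sigma> k)" if u: "u \<in> carrier_vec N" and k: "k < N" for u k
  proof -
    have "(g u) $ k = (\<Sum>r\<in>{0..<N}. (if \<sigma> r = k then 1 else 0) * u $ r)"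
      using u k Pc by (simp add: g_def scalar_prod_def Pdef)
    also have "\<dots> = (\<Sum>r\<in>{0..<N}. (if r = inv_into UNIV \<sigma> k then u $ r else 0))"
      by (intro sum.cong refl) (auto simp: inv1 inv2)
    also have "\<dots> = u $ (inv_into UNIV \<sigma> k)" using ilt[OF k] by simp
    finally show ?thesis .
  qed
  have ginj: "inj_on g (carrier_vec N)"
  proof
    fix u v assume u: "u \<in> carrier_vec N" and v: "v \<in> carrier_vec N" and e: "g u = g v"
    show "u = v"
    proof (rule eq_vecI)
      fix j assume "j < dim_vec v"
      then have j: "j < N" using v by simp
      have "u $ (inv_into UNIV \<sigma> (\<sigma> j)) = v $ (inv_into UNIV \<sigma> (\<sigma> j))"
        using gapp[OF u slt[OF j]] gapp[OF v slt[OF j]] e by simp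
      then show "u $ j = v $ j" by (simp add: inv1)
    qed (use u v in simp)
  qed
  define RS where "RS = row_space A"
  have RSsub: "RS \<subseteq> carrier_vec N"
    using Ac by (auto simp: RS_def row_space_def)
  have RSfin: "finite RS" using RSsub finite_carrier_vec_bit finite_subset by blast
  have gRS: "g ` RS \<subseteq> RS"
  proof
    fix w assume "w \<in> g ` RS"
    then obtain v where v: "v \<in> carrier_vec m" and w: "w = g (transpose_mat A *\<^sub>v v)"
      using Ac by (auto simp: RS_def row_space_def)
    have "w = (transpose_mat P * transpose_mat A) *\<^sub>v v"
      using w v Ac Pc by (simp add: g_def)
    also have "transpose_mat P * transpose_mat A = transpose_mat (A * P)"
      using transpose_mult[OF Ac Pc] by simp
    also have "\<dots> = transpose_mat (H * A)" using AP by simp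
    also have "\<dots> = transpose_mat A * transpose_mat H"
      using transpose_mult[OF Hc Ac] by simp
    finally have "w = transpose_mat A *\<^sub>v (transpose_mat H *\<^sub>v v)"
      using v Ac Hc by simp
    moreover have "transpose_mat H *\<^sub>v v \<in> carrier_vec (dim_row A)"
    proof -
      have "transpose_mat H \<in> carrier_mat m m" using Hc by (simp only: transpose_carrier_mat)
      then have "transpose_mat H *\<^sub>v v \<in> carrier_vec m" using v by (rule mult_mat_vec_carrier)
      moreover have "dim_row A = m" using Ac by (rule carrier_matD)
      ultimately show ?thesis by simp
    qed
    ultimately show "w \<in> RS" unfolding RS_def row_space_def by blast
  qed
  have gRSeq: "g ` RS = RS"
  proof (rule card_subset_eq[OF RSfin gRS])
    show "card (g ` RS) = card RS"
      using card_image inj_on_subset[OF ginj RSsub] by blast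
  qed
  define F where "F u z = W 0 (act flip u z)" for u z
  have TP: "T_P N P y c = y (inv_into UNIV \<sigma> c)" if c: "c < N" for c
  proof -
    have "(THE r. r < N \<and> P $$ (r, c) = 1) = inv_into UNIV \<sigma> c"
    proof (rule the_equality)
      show "inv_into UNIV \<sigma> c < N \<and> P $$ (inv_into UNIV \<sigma> c, c) = 1" using ilt[OF c] c by (simp add: Pdef inv2)
    next
      fix r assume "r < N \<and> P $$ (r, c) = 1"
      then have "\<sigma> r = c" using c by (auto simp: Pdef split: if_splits)
      then show "r = inv_into UNIV \<sigma> c" using inv1 by metis
    qed
    then show ?thesis by (simp add: T_P_def)
  qed
  have "(\<Sum>u\<in>RS. \<Prod>j<N. F (u $ j) (T_P N P y j)) = (\<Sum>u\<in>RS. \<Prod>j<N. F (u $ j) (y (inv_into UNIV \<sigma> j)))"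
    by (intro sum.cong prod.cong refl) (simp add: TP)
  also have "\<dots> = (\<Sum>u\<in>g ` RS. \<Prod>j<N. F (u $ j) (y (inv_into UNIV \<sigma> j)))" by (simp add: gRSeq)
  also have "\<dots> = (\<Sum>u\<in>RS. \<Prod>j<N. F ((g u) $ j) (y (inv_into UNIV \<sigma> j)))"
    using sum.reindex[OF inj_on_subset[OF ginj RSsub]] by simp
  also have "\<dots> = (\<Sum>u\<in>RS. \<Prod>j<N. F (u $ (inv_into UNIV \<sigma> j)) (y (inv_into UNIV \<sigma> j)))"
  proof (intro sum.cong prod.cong refl)
    fix u j assume u: "u \<in> RS" and j: "j \<in> {..<N}"
    have "g u $ j = u $ (inv_into UNIV \<sigma> j)" using gapp[of u j] u j RSsub by blast
    then show "F (g u $ j) (y (inv_into UNIV \<sigma> j)) = F (u $ (inv_into UNIV \<sigma> j)) (y (inv_into UNIV \<sigma> j))"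
      by simp
  qed
  also have "\<dots> = (\<Sum>u\<in>RS. \<Prod>j<N. F (u $ j) (y j))"
  proof (intro sum.cong refl)
    fix u
    show "(\<Prod>j<N. F (u $ (inv_into UNIV \<sigma> j)) (y (inv_into UNIV \<sigma> j))) = (\<Prod>j<N. F (u $ j) (y j))"
      using prod.permute[OF isig, of "\<lambda>j. F (u $ j) (y j)"] by (simp add: comp_def)
  qed
  finally have eq: "(\<Sum>u\<in>RS. \<Prod>j<N. F (u $ j) (T_P N P y j)) = (\<Sum>u\<in>RS. \<Prod>j<N. F (u $ j) (y j))" .
  have "W_A W flip N A (T_P N P y) = W_A W flip N A y"
    unfolding W_A_def F_def[symmetric] RS_def[symmetric] using eq by (rule arg_cong)
  then show ?thesis by (simp only: A_def N_def)
qed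

end
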